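(* For all integers $n,k\ge0$, the integer $|v(n,k)|$, where $v(n,k)=4^{n-k}t(2n+1,2k+1)$, is the number of $(n,k)$-Riordan complexes.
   Context: $t(m,k)$ are the central factorial numbers of the first kind. Equivalently, $|v(n,k)|$ is the coefficient of $t^{2k+1}$ in $t(t^2+1^2)(t^2+3^2)\cdots(t^2+(2n-1)^2)$ (the empty product for $n=0$ giving $t$); also $v(0,0)=1$, $v(0,k)=0$ for $k\ge1$, $v(n,-1)=0$, and $v(n,k)=v(n-1,k-1)-(2n-1)^2v(n-1,k)$ for $n\ge1$. An $(n,k)$-Riordan complex is a $(2k+1)$-tuple $((B_1,\sigma_1,\tau_1),\dots,(B_{2k+1},\sigma_{2k+1},\tau_{2k+1}))$ such that (i) $\{B_1,\dots,B_{2k+1}\}$ is a partition of $\{1,\dots,2n+1\}$ into blocks of odd cardinality, and (ii) for each $i$, $\sigma_i$ and $\tau_i$ are fixed-point-free involutions of $B_i\setminus\{\max(B_i)\}$. *)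

theory Defs
  imports "HOL-Computational_Algebra.Polynomial" "HOL-Library.Disjoint_Sets"
begin

text \<open>Central factorial numbers of the first kind: t(m,k) is the coefficient of x^k in
  x^{[m]} = x (x + m/2 - 1) (x + m/2 - 2) ... (x - m/2 + 1)  (m factors), with x^{[0]} = 1.\<close>
definition central_fact_poly :: "nat \<Rightarrow> rat poly" where
  "central_fact_poly m =
     (if m = 0 then 1
      else [:0, 1:] * (\<Prod>i\<in>{1..m-1}. [: of_nat m / 2 - of_nat i, 1 :]))"

definition cfact1 :: "nat \<Rightarrow> nat \<Rightarrow> rat" where
  "cfact1 m k = coeff (central_fact_poly m) k"

text \<open>v(n,k) = 4^(n-k) t(2n+1, 2k+1) (for k > n, t(2n+1,2k+1) = 0, so the exponent convention is irrelevant).\<close>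
definition vnum :: "nat \<Rightarrow> nat \<Rightarrow> rat" where
  "vnum n k = 4 ^ (n - k) * cfact1 (2*n+1) (2*k+1)"

text \<open>Fixed-point-free involution of a set S; as a total function we require it to be the
  identity outside S (so that it is determined by its restriction to S).\<close>
definition fpf_involution_on :: "nat set \<Rightarrow> (nat \<Rightarrow> nat) \<Rightarrow> bool" where
  "fpf_involution_on S \<sigma> \<longleftrightarrow>
     (\<forall>x\<in>S. \<sigma> x \<in> S \<and> \<sigma> x \<noteq> x \<and> \<sigma> (\<sigma> x) = x) \<and> (\<forall>x. x \<notin> S \<longrightarrow> \<sigma> x = x)"

text \<open>An (n,k)-Riordan complex, taken up to reordering of its 2k+1 components, i.e. as the
  set of its triples (B_i, sigma_i, tau_i); the blocks B_i are pairwise distinct.\<close>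
definition riordan_complex :: "nat \<Rightarrow> nat \<Rightarrow> (nat set \<times> (nat \<Rightarrow> nat) \<times> (nat \<Rightarrow> nat)) set \<Rightarrow> bool" where
  "riordan_complex n k R \<longleftrightarrow>
     finite R \<and> card R = 2*k+1 \<and> inj_on fst R \<and>
     partition_on {1..2*n+1} (fst ` R) \<and>
     (\<forall>(B,\<sigma>,\<tau>)\<in>R. odd (card B) \<and>
        fpf_involution_on (B - {Max B}) \<sigma> \<and> fpf_involution_on (B - {Max B}) \<tau>)"

end

theory Submission
  imports Defs "HOL-Computational_Algebra.Formal_Power_Series"
begin


definition Fp :: "nat set \<Rightarrow> (nat \<Rightarrow> nat) set" where
  "Fp T = {\<sigma>. fpf_involution_on T \<sigma>}"

fun ninv :: "nat \<Rightarrow> nat" where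
  "ninv 0 = 1" | "ninv (Suc 0) = 0" | "ninv (Suc (Suc r)) = Suc r * ninv r"

lemma ninv_Suc: "ninv (Suc m) = m * ninv (m - 1)"
  by (cases m) auto

lemma Fp_empty: "Fp {} = {id}"
  by (auto simp: Fp_def fpf_involution_on_def)

lemma Fp_split:
  assumes "x \<in> T"
  shows "Fp T = (\<Union>p\<in>T-{x}. (\<lambda>\<rho>. \<rho>(x:=p, p:=x)) ` Fp (T - {x,p}))"
proof (intro equalityI subsetI)
  fix \<sigma> assume s: "\<sigma> \<in> Fp T"
  let ?p = "\<sigma> x"
  have p: "?p \<in> T - {x}" using s assms by (auto simp: Fp_def fpf_involution_on_def)
  have "\<sigma>(x:=x, ?p:=?p) \<in> Fp (T - {x,?p})"
    using s assms unfolding Fp_def fpf_involution_on_def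
    by (auto, metis+)
  moreover have "\<sigma> = (\<sigma>(x:=x, ?p:=?p))(x:=?p, ?p:=x)"
    using s assms p unfolding Fp_def fpf_involution_on_def by (auto simp: fun_eq_iff)
  ultimately show "\<sigma> \<in> (\<Union>p\<in>T-{x}. (\<lambda>\<rho>. \<rho>(x:=p, p:=x)) ` Fp (T - {x,p}))"
    using p by blast
next
  fix \<sigma> assume "\<sigma> \<in> (\<Union>p\<in>T-{x}. (\<lambda>\<rho>. \<rho>(x:=p, p:=x)) ` Fp (T - {x,p}))"
  then obtain p \<rho> where p: "p \<in> T - {x}" and r: "\<rho> \<in> Fp (T - {x,p})" and s: "\<sigma> = \<rho>(x:=p, p:=x)"
    by blast
  show "\<sigma> \<in> Fp T"
    using p r assms unfolding s Fp_def fpf_involution_on_def by auto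
qed

lemma Fp_card: "finite T \<Longrightarrow> finite (Fp T) \<and> card (Fp T) = ninv (card T)"
proof (induction "card T" arbitrary: T rule: less_induct)
  case less
  show ?case
  proof (cases "T = {}")
    case True then show ?thesis by (simp add: Fp_empty)
  next
    case False
    then obtain x where x: "x \<in> T" by blast
    have IH: "finite (Fp (T - {x,p})) \<and> card (Fp (T - {x,p})) = ninv (card T - 2)" if "p \<in> T - {x}" for p
    proof -
      have c: "card (T - {x,p}) = card T - 2" using that x less(2) by (simp add: card_Diff_subset)
      have "2 \<le> card T" using that x less(2)
      proof -
        have "{x,p} \<subseteq> T" using that x by auto
        then have "card {x,p} \<le> card T" using less(2) by (rule card_mono[rotated])
        then show ?thesis using that by simp
      qed
      then show ?thesis using less(1)[of "T - {x,p}"] less(2) c by simp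
    qed
    have inj: "inj_on (\<lambda>\<rho>. \<rho>(x:=p, p:=x)) (Fp (T - {x,p}))" if "p \<in> T - {x}" for p
    proof (rule inj_onI)
      fix a b assume a: "a \<in> Fp (T - {x,p})" and b: "b \<in> Fp (T - {x,p})"
        and e: "a(x:=p, p:=x) = b(x:=p, p:=x)"
      have "a x = x" "a p = p" "b x = x" "b p = p" using a b unfolding Fp_def fpf_involution_on_def by auto
      then show "a = b" using e that by (auto simp: fun_eq_iff split: if_splits) metis
    qed
    have disj: "(\<lambda>\<rho>. \<rho>(x:=p, p:=x)) ` Fp (T - {x,p}) \<inter> (\<lambda>\<rho>. \<rho>(x:=q, q:=x)) ` Fp (T - {x,q}) = {}"
      if "p \<in> T - {x}" "q \<in> T - {x}" "p \<noteq> q" for p q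
      using that by (auto simp: fun_eq_iff) (metis fun_upd_same fun_upd_other)
    have fin: "finite (Fp T)"
      unfolding Fp_split[OF x] using less(2) IH by auto
    have "card (Fp T) = (\<Sum>p\<in>T-{x}. card ((\<lambda>\<rho>. \<rho>(x:=p, p:=x)) ` Fp (T - {x,p})))"
      unfolding Fp_split[OF x]
      by (rule card_UN_disjoint) (use less(2) IH disj in auto)
    also have "\<dots> = (\<Sum>p\<in>T-{x}. ninv (card T - 2))"
      by (rule sum.cong) (auto simp: card_image inj IH)
    also have "\<dots> = ninv (card T)"
      using x less(2) by (cases "card T") (auto simp: ninv_Suc)
    finally show ?thesis using fin by simp
  qed
qed

lemma ninv_odd: "ninv (Suc (2*r)) = 0"
proof (induction r)
  case 0 then show ?case by simp
next
  case (Suc r)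
  have e: "Suc (2 * Suc r) = Suc (Suc (Suc (2*r)))" by simp
  show ?case unfolding e ninv.simps(3) using Suc by simp
qed

lemma Fp_even:
  assumes f: "finite T" and s: "\<sigma> \<in> Fp T" shows "even (card T)"
proof (rule ccontr)
  assume o: "odd (card T)"
  have "card T = Suc (2 * (card T div 2))" using o by presburger
  then have "ninv (card T) = 0" using ninv_odd by metis
  then have "card (Fp T) = 0" using Fp_card[OF f] by simp
  then have "Fp T = {}" using Fp_card[OF f] card_0_eq by blast
  then show False using s by simp
qed

definition cplx :: "nat set \<Rightarrow> nat \<Rightarrow> (nat set \<times> (nat \<Rightarrow> nat) \<times> (nat \<Rightarrow> nat)) set \<Rightarrow> bool" where
  "cplx S j R \<longleftrightarrow>
     finite R \<and> card R = j \<and> inj_on fst R \<and>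
     partition_on S (fst ` R) \<and>
     (\<forall>(B,\<sigma>,\<tau>)\<in>R. odd (card B) \<and>
        fpf_involution_on (B - {Max B}) \<sigma> \<and> fpf_involution_on (B - {Max B}) \<tau>)"

lemma riordan_cplx: "riordan_complex n k R = cplx {1..2*n+1} (2*k+1) R"
  unfolding riordan_complex_def cplx_def by simp

lemma cplx_finite:
  assumes "finite S" shows "finite {R. cplx S j R}"
proof -
  let ?F = "\<Union>T\<in>Pow S. Fp T"
  have fF: "finite ?F" using assms Fp_card by (auto dest: finite_subset)
  have "{R. cplx S j R} \<subseteq> Pow (Pow S \<times> ?F \<times> ?F)"
  proof
    fix R assume "R \<in> {R. cplx S j R}"
    then have c: "cplx S j R" by simp
    show "R \<in> Pow (Pow S \<times> ?F \<times> ?F)"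
    proof (rule PowI, rule subsetI)
      fix t assume t: "t \<in> R"
      obtain B \<sigma> \<tau> where tt: "t = (B,\<sigma>,\<tau>)" by (cases t) auto
      have B: "B \<subseteq> S" using c t tt unfolding cplx_def partition_on_def by force
      have "\<sigma> \<in> Fp (B - {Max B})" "\<tau> \<in> Fp (B - {Max B})"
        using c t tt unfolding cplx_def Fp_def by auto
      then show "t \<in> Pow S \<times> ?F \<times> ?F" using B tt by blast
    qed
  qed
  moreover have "finite (Pow (Pow S \<times> ?F \<times> ?F))" using fF assms by simp
  ultimately show ?thesis by (rule finite_subset)
qed

lemma cplx_empty: "cplx {} j R \<longleftrightarrow> j = 0 \<and> R = {}"
  unfolding cplx_def by (auto simp: partition_on_empty)

lemma cplx_zero: "S \<noteq> {} \<Longrightarrow> \<not> cplx S 0 R"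
  unfolding cplx_def partition_on_def by auto

lemma cplx_decomp:
  fixes j :: nat
  assumes S: "finite S" "S \<noteq> {}" and M: "M = Max S"
  defines "X \<equiv> \<lambda>T. {R'. cplx (S - insert M T) j R'}"
  defines "Tr \<equiv> Sigma (Pow (S - {M})) (\<lambda>T. Fp T \<times> Fp T)"
  shows "{R. cplx S (Suc j) R} =
    (\<Union>p\<in>Tr. insert (insert M (fst p), fst (snd p), snd (snd p)) ` X (fst p))"
proof (intro equalityI subsetI)
  fix R assume "R \<in> {R. cplx S (Suc j) R}"
  then have c: "cplx S (Suc j) R" by simp
  have MS: "M \<in> S" using S M by simp
  then obtain t where t: "t \<in> R" and Mt: "M \<in> fst t"
    using c unfolding cplx_def partition_on_def by auto
  obtain B \<sigma> \<tau> where tt: "t = (B,\<sigma>,\<tau>)" by (cases t) auto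
  have BS: "B \<subseteq> S" using c t tt unfolding cplx_def partition_on_def by force
  have fB: "finite B" using BS S finite_subset by blast
  have MB: "Max B = M"
  proof (rule antisym)
    show "Max B \<le> M" using M BS S Mt tt fB by (metis Max_mono empty_iff fst_conv)
    show "M \<le> Max B" using fB Mt tt by simp
  qed
  define T where "T = B - {M}"
  have BT: "B = insert M T" using Mt tt T_def by auto
  have sT: "\<sigma> \<in> Fp T" "\<tau> \<in> Fp T" using c t tt MB unfolding cplx_def Fp_def T_def by auto
  have TS: "T \<in> Pow (S - {M})" using BS T_def by auto
  define R' where "R' = R - {t}"
  have inj: "inj_on fst R" using c cplx_def by blast
  have fR': "fst ` R' = fst ` R - {B}"
    unfolding R'_def using inj_on_image_set_diff[OF inj, of R "{t}"] t tt by auto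
  have part: "partition_on S (fst ` R)" using c cplx_def by blast
  have ins: "fst ` R = insert B (fst ` R')" using fR' t tt by force
  have dj: "disjnt B (\<Union>(fst ` R'))"
  proof -
    have "disjoint (fst ` R)" using part partition_onD2 by blast
    moreover have "B \<in> fst ` R" using t tt by force
    ultimately show ?thesis unfolding disjnt_Union2 fR' by (auto intro: pairwiseD)
  qed
  have part': "partition_on (S - B) (fst ` R')"
    using part unfolding ins partition_on_insert[OF dj] by blast
  have "cplx (S - B) j R'"
    unfolding cplx_def
  proof (intro conjI)
    show "finite R'" using c R'_def cplx_def by auto
    show "card R' = j" using c t R'_def cplx_def by auto
    show "inj_on fst R'" using inj R'_def inj_on_subset by blast
    show "partition_on (S - B) (fst ` R')" by (rule part')
    show "\<forall>(B, \<sigma>, \<tau>)\<in>R'. odd (card B) \<and> fpf_involution_on (B - {Max B}) \<sigma> \<and> fpf_involution_on (B - {Max B}) \<tau>"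
      using c R'_def cplx_def by auto
  qed
  then have "R' \<in> X T" unfolding X_def BT by simp
  moreover have "R = insert (insert M T, \<sigma>, \<tau>) R'" using t tt BT R'_def by auto
  ultimately show "R \<in> (\<Union>p\<in>Tr. insert (insert M (fst p), fst (snd p), snd (snd p)) ` X (fst p))"
    unfolding Tr_def using TS sT by force
next
  fix R assume "R \<in> (\<Union>p\<in>Tr. insert (insert M (fst p), fst (snd p), snd (snd p)) ` X (fst p))"
  then obtain T \<sigma> \<tau> R' where TS: "T \<subseteq> S - {M}" and sT: "\<sigma> \<in> Fp T" "\<tau> \<in> Fp T"
    and c': "cplx (S - insert M T) j R'" and R: "R = insert (insert M T, \<sigma>, \<tau>) R'"
    unfolding Tr_def X_def by auto
  define B where "B = insert M T"
  have MS: "M \<in> S" using S M by simp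
  have fT: "finite T" using TS S finite_subset by blast
  have MB: "Max B = M"
    unfolding B_def using fT TS S M by (auto intro!: Max_eqI)
  have BT: "B - {M} = T" using TS B_def by auto
  have "M \<notin> T" using TS by auto
  then have oB: "odd (card B)" using Fp_even[OF fT sT(1)] fT B_def by simp
  have part': "partition_on (S - B) (fst ` R')" using c' B_def cplx_def by blast
  have notin: "B \<notin> fst ` R'"
  proof
    assume "B \<in> fst ` R'"
    then have "B \<subseteq> S - B" using part' partition_onD1 by blast
    then show False using B_def by auto
  qed
  have dj: "disjnt B (\<Union>(fst ` R'))" using part' partition_onD1 by (fastforce simp: disjnt_def)
  have BS: "B \<subseteq> S" using TS MS B_def by auto
  have part: "partition_on S (insert B (fst ` R'))"
    unfolding partition_on_insert[OF dj] using part' BS B_def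
    by (simp add: Diff_Diff_Int Int_absorb1 double_diff)
  have tn: "(B, \<sigma>, \<tau>) \<notin> R'" using notin by force
  show "R \<in> {R. cplx S (Suc j) R}"
    unfolding mem_Collect_eq cplx_def
  proof (intro conjI)
    show "finite R" using c' R cplx_def by auto
    show "card R = Suc j" using c' R tn B_def cplx_def by auto
    show "inj_on fst R" using c' R notin B_def cplx_def by auto
    show "partition_on S (fst ` R)" using part R B_def by simp
    show "\<forall>(B, \<sigma>, \<tau>)\<in>R. odd (card B) \<and> fpf_involution_on (B - {Max B}) \<sigma> \<and> fpf_involution_on (B - {Max B}) \<tau>"
      using c' R oB MB BT sT B_def unfolding cplx_def Fp_def by auto
  qed
qed



lemma cplx_card_Suc:
  fixes j :: nat
  assumes S: "finite S" "S \<noteq> {}" and M: "M = Max S"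
  shows "card {R. cplx S (Suc j) R} =
    (\<Sum>T\<in>Pow (S - {M}). ninv (card T) ^ 2 * card {R'. cplx (S - insert M T) j R'})"
proof -
  define X where "X \<equiv> \<lambda>T. {R'. cplx (S - insert M T) j R'}"
  define Tr where "Tr \<equiv> Sigma (Pow (S - {M})) (\<lambda>T. Fp T \<times> Fp T)"
  define f where "f \<equiv> \<lambda>p::nat set \<times> (nat \<Rightarrow> nat) \<times> (nat \<Rightarrow> nat). insert (insert M (fst p), fst (snd p), snd (snd p))"
  have MS: "M \<in> S" using S M by simp
  have fX: "finite (X T)" for T using cplx_finite S unfolding X_def by simp
  have fTr: "finite Tr" unfolding Tr_def using S Fp_card by (auto intro!: finite_SigmaI dest: finite_subset)
  have notin: "(insert M T, a, b) \<notin> R'" if "R' \<in> X T" for T a b R'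
  proof
    assume "(insert M T, a, b) \<in> R'"
    then have "insert M T \<in> fst ` R'" by (rule rev_image_eqI) simp
    then have "insert M T \<subseteq> S - insert M T" using that unfolding X_def cplx_def partition_on_def by blast
    then show False by auto
  qed
  have inj: "inj_on (f p) (X (fst p))" for p
    unfolding f_def by (rule inj_onI) (metis notin insert_ident)
  have disj: "f p ` X (fst p) \<inter> f q ` X (fst q) = {}" if "p \<in> Tr" "q \<in> Tr" "p \<noteq> q" for p q
  proof (rule ccontr)
    assume "f p ` X (fst p) \<inter> f q ` X (fst q) \<noteq> {}"
    then obtain R1 R2 where R1: "R1 \<in> X (fst p)" and R2: "R2 \<in> X (fst q)" and e: "f p R1 = f q R2"
      by blast
    let ?t = "(insert M (fst p), fst (snd p), snd (snd p))"
    have "?t \<noteq> (insert M (fst q), fst (snd q), snd (snd q))"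
    proof
      assume h: "?t = (insert M (fst q), fst (snd q), snd (snd q))"
      have m: "M \<notin> fst p" "M \<notin> fst q" using that unfolding Tr_def by auto
      have "insert M (fst p) = insert M (fst q)" using h by simp
      then have "fst p = fst q" using m by (metis Diff_insert_absorb)
      moreover have "snd p = snd q" using h by (simp add: prod_eq_iff)
      ultimately show False using that(3) by (simp add: prod_eq_iff)
    qed
    then have "?t \<in> R2" using e unfolding f_def by (metis insertE insertI1)
    then have "insert M (fst p) \<in> fst ` R2" by (rule rev_image_eqI) simp
    then have "insert M (fst p) \<subseteq> S - insert M (fst q)" using R2 unfolding X_def cplx_def partition_on_def by blast
    then show False by auto
  qed
  have "card {R. cplx S (Suc j) R} = card (\<Union>p\<in>Tr. f p ` X (fst p))"
    using cplx_decomp[OF S M, of j] unfolding X_def Tr_def f_def by simp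
  also have "\<dots> = (\<Sum>p\<in>Tr. card (f p ` X (fst p)))"
  proof (rule card_UN_disjoint)
    show "finite Tr" by (rule fTr)
    show "\<forall>p\<in>Tr. finite (f p ` X (fst p))" using fX by blast
    show "\<forall>p\<in>Tr. \<forall>q\<in>Tr. p \<noteq> q \<longrightarrow> f p ` X (fst p) \<inter> f q ` X (fst q) = {}"
      using disj by blast
  qed
  also have "\<dots> = (\<Sum>p\<in>Tr. card (X (fst p)))"
    by (rule sum.cong) (auto simp: card_image inj)
  also have "\<dots> = (\<Sum>T\<in>Pow (S - {M}). \<Sum>q\<in>Fp T \<times> Fp T. card (X T))"
  proof -
    have fP: "finite (Pow (S - {M}))" using S by simp
    have fF: "\<forall>T\<in>Pow (S - {M}). finite (Fp T \<times> Fp T)"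
      using S Fp_card by (auto dest: finite_subset)
    show ?thesis unfolding Tr_def using sum.Sigma[OF fP fF, of "\<lambda>T q. card (X T)"]
      by (simp add: case_prod_beta)
  qed
  also have "\<dots> = (\<Sum>T\<in>Pow (S - {M}). ninv (card T) ^ 2 * card (X T))"
  proof (rule sum.cong)
    fix T assume "T \<in> Pow (S - {M})"
    then have "finite T" using S finite_subset by auto
    then show "(\<Sum>q\<in>Fp T \<times> Fp T. card (X T)) = ninv (card T) ^ 2 * card (X T)"
      using Fp_card[of T] by (simp add: card_cartesian_product power2_eq_square)
  qed simp
  finally show ?thesis unfolding X_def .
qed

lemma sum_Pow_card:
  fixes h :: "nat \<Rightarrow> 'a::comm_semiring_1"
  assumes "finite A"
  shows "(\<Sum>T\<in>Pow A. h (card T)) = (\<Sum>r\<le>card A. of_nat (card A choose r) * h r)"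
proof -
  have "(\<Sum>T\<in>Pow A. h (card T)) = (\<Sum>r\<le>card A. \<Sum>T\<in>{T. T \<in> Pow A \<and> card T = r}. h (card T))"
    by (rule sum.group[symmetric]) (use assms in \<open>auto intro: card_mono\<close>)
  also have "\<dots> = (\<Sum>r\<le>card A. of_nat (card A choose r) * h r)"
  proof (rule sum.cong)
    fix r
    have "(\<Sum>T\<in>{T. T \<in> Pow A \<and> card T = r}. h (card T)) = (\<Sum>T\<in>{T. T \<subseteq> A \<and> card T = r}. h r)"
      by (rule sum.cong) auto
    also have "\<dots> = of_nat (card A choose r) * h r"
      using n_subsets[OF assms, of r] by simp
    finally show "(\<Sum>T\<in>{T. T \<in> Pow A \<and> card T = r}. h (card T)) = of_nat (card A choose r) * h r" .
  qed simp
  finally show ?thesis .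
qed

fun P :: "nat \<Rightarrow> rat poly" where
  "P 0 = 1"
| "P (Suc N) = [:0,1:] * (\<Sum>r\<le>N. smult (of_nat ((N choose r) * ninv r ^ 2)) (P (N - r)))"

lemma coeff_X_mult: fixes p :: "rat poly" shows "coeff ([:0,1:] * p) 0 = 0" "coeff ([:0,1:] * p) (Suc i) = coeff p i"
  by (simp_all add: coeff_pCons)

lemma count_P: "finite S \<Longrightarrow> of_nat (card {R. cplx S j R}) = coeff (P (card S)) j"
proof (induction "card S" arbitrary: S j rule: less_induct)
  case less
  show ?case
  proof (cases "S = {}")
    case True
    have "{R. cplx S j R} = (if j = 0 then {{}} else {})" using True cplx_empty by auto
    then show ?thesis using True by (simp add: coeff_1 split: if_splits)
  next
    case False
    define M where "M = Max S"
    have MS: "M \<in> S" using False less(2) M_def by simp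
    define N where "N = card (S - {M})"
    have "card S > 0" using MS less(2) card_gt_0_iff by blast
    then have cS: "card S = Suc N" using MS less(2) N_def by simp
    show ?thesis
    proof (cases j)
      case 0
      have e: "{R. cplx S j R} = {}" using cplx_zero[OF False] 0 by simp
      show ?thesis unfolding e using 0 cS by (simp add: coeff_X_mult)
    next
      case (Suc i)
      have IH: "of_nat (card {R'. cplx (S - insert M T) i R'}) = coeff (P (N - card T)) i"
        if "T \<in> Pow (S - {M})" for T
      proof -
        have fT: "finite T" using that less(2) finite_subset by auto
        have "card (S - insert M T) = card S - card (insert M T)"
          using that MS less(2) by (intro card_Diff_subset) (auto intro: finite_subset)
        also have "\<dots> = N - card T"
        proof -
          have "M \<notin> T" using that by auto
          then show ?thesis using cS fT by simp
        qed
        finally have c: "card (S - insert M T) = N - card T" .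
        show ?thesis using less(1)[of "S - insert M T" i] c cS less(2) by simp
      qed
      have "of_nat (card {R. cplx S j R}) =
          (\<Sum>T\<in>Pow (S - {M}). of_nat (ninv (card T) ^ 2) * (of_nat (card {R'. cplx (S - insert M T) i R'}) :: rat))"
        unfolding Suc cplx_card_Suc[OF less(2) False M_def] by simp
      also have "\<dots> = (\<Sum>T\<in>Pow (S - {M}). of_nat (ninv (card T) ^ 2) * coeff (P (N - card T)) i)"
        by (rule sum.cong) (simp_all add: IH)
      also have "\<dots> = (\<Sum>r\<le>N. of_nat (N choose r) * (of_nat (ninv r ^ 2) * coeff (P (N - r)) i))"
        using sum_Pow_card[of "S - {M}" "\<lambda>r. of_nat (ninv r ^ 2) * coeff (P (N - r)) i"] less(2)
        unfolding N_def by simp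
      also have "\<dots> = coeff (P (card S)) j"
        unfolding cS Suc P.simps coeff_X_mult coeff_sum coeff_smult
        by (rule sum.cong) (simp_all add: algebra_simps)
      finally show ?thesis .
    qed
  qed
qed



definition EF :: "(nat \<Rightarrow> rat) \<Rightarrow> rat fps" where
  "EF q = Abs_fps (\<lambda>n. q n / fact n)"

lemma EF_nth [simp]: "fps_nth (EF q) n = q n / fact n"
  by (simp add: EF_def)

lemma EF_deriv: "fps_deriv (EF q) = EF (\<lambda>n. q (Suc n))"
  by (simp add: fps_eq_iff fps_deriv_nth field_simps fact_Suc del: of_nat_Suc) 

definition gg :: "nat \<Rightarrow> rat" where "gg N = of_nat (ninv N ^ 2)"

lemma gg_simps: "gg 0 = 1" "gg (Suc 0) = 0" "gg (Suc (Suc r)) = of_nat (Suc r) ^ 2 * gg r"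
  unfolding gg_def by (simp_all only: ninv.simps of_nat_mult power_mult_distrib) simp_all

lemma P_rec_poly: "poly (P (Suc N)) x = x * (\<Sum>r\<le>N. of_nat (N choose r) * gg r * poly (P (N - r)) x)"
  unfolding P.simps poly_mult poly_sum poly_smult gg_def by (simp add: mult_ac)

lemma F_deriv: "fps_deriv (EF (\<lambda>N. poly (P N) x)) = fps_const x * EF gg * EF (\<lambda>N. poly (P N) x)"
proof (rule fps_ext)
  fix n
  have "fps_nth (fps_deriv (EF (\<lambda>N. poly (P N) x))) n = poly (P (Suc n)) x / fact n"
    by (simp add: EF_deriv)
  also have "\<dots> = x * (\<Sum>r\<le>n. of_nat (n choose r) * gg r * poly (P (n - r)) x) / fact n"
    by (simp only: P_rec_poly)
  also have "\<dots> = x * (\<Sum>r\<le>n. of_nat (n choose r) * gg r * poly (P (n - r)) x / fact n)"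
    by (simp add: sum_divide_distrib[symmetric])
  also have "\<dots> = x * (\<Sum>r\<le>n. gg r / fact r * (poly (P (n - r)) x / fact (n - r)))"
    by (intro arg_cong[where f="(*) x"] sum.cong) (auto simp: binomial_fact field_simps)
  also have "\<dots> = fps_nth (fps_const x * EF gg * EF (\<lambda>N. poly (P N) x)) n"
    unfolding mult.assoc fps_mult_left_const_nth unfolding fps_mult_nth atLeast0AtMost by simp
  finally show "fps_nth (fps_deriv (EF (\<lambda>N. poly (P N) x))) n = fps_nth (fps_const x * EF gg * EF (\<lambda>N. poly (P N) x)) n" .
qed

lemma G_ode: "(1 - fps_X^2) * fps_deriv (EF gg) = fps_X * EF gg"
proof (rule fps_ext)
  fix n
  have a: "fps_nth ((1 - fps_X^2) * fps_deriv (EF gg)) n = fps_nth (fps_deriv (EF gg)) n - (if n < 2 then 0 else fps_nth (fps_deriv (EF gg)) (n - 2))"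
    unfolding left_diff_distrib mult_1 fps_sub_nth fps_X_power_mult_nth by simp
  have b: "fps_nth (fps_X * EF gg) n = (if n = 0 then 0 else gg (n - 1) / fact (n - 1))"
    by (simp add: fps_X_mult_nth)
  show "fps_nth ((1 - fps_X^2) * fps_deriv (EF gg)) n = fps_nth (fps_X * EF gg) n"
  proof (cases n)
    case 0 then show ?thesis unfolding a b by (simp add: gg_simps EF_deriv)
  next
    case (Suc m) note m = this
    show ?thesis
    proof (cases m)
      case 0 then show ?thesis unfolding a b using m by (simp add: gg_simps EF_deriv)
    next
      case (Suc l)
      have e: "(y+2)^2*g/((y+2)*((y+1)*f)) - g/f = g/((y+1)*f)" if "f \<noteq> 0" "(y::rat) \<ge> 0" for y f g
      proof -
        have h: "y + 1 \<noteq> 0" "y + 2 \<noteq> 0" "1 + y \<noteq> 0" "2 + y \<noteq> 0" using that by linarith+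
        have "(y+2)^2*g/((y+2)*((y+1)*f)) = (y+2)*g/((y+1)*f)"
          using h by (simp add: power2_eq_square)
        also have "\<dots> - g/f = g/((y+1)*f)"
          using h that by (simp add: divide_simps) (simp add: algebra_simps)
        finally show ?thesis .
      qed
      have "gg (Suc (Suc (Suc l))) = (of_nat l + 2)^2 * gg (Suc l)" by (simp add: gg_simps)
      then show ?thesis unfolding a b using m Suc e[of "fact l" "of_nat l" "gg (Suc l)"]
        by (simp add: EF_deriv fact_Suc algebra_simps)
    qed
  qed
qed

lemma dX: "fps_deriv (1 - fps_X^2 :: rat fps) = - (fps_X + fps_X)"
  by (rule fps_ext) (auto simp: fps_X_power_iff fps_numeral_nth)

lemma H_one: "(1 - fps_X^2) * (EF gg)^2 = 1"
proof -
  let ?G = "EF gg"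
  have "fps_deriv ((1 - fps_X^2) * ?G^2) = ?G * ((1 - fps_X^2) * fps_deriv ?G) + ?G * ((1 - fps_X^2) * fps_deriv ?G) - (fps_X * ?G * ?G + fps_X * ?G * ?G)"
    by (simp add: power2_eq_square dX algebra_simps del: fps_deriv_power)
  also have "\<dots> = 0" unfolding G_ode by (simp add: algebra_simps)
  finally have d: "fps_deriv ((1 - fps_X^2) * ?G^2) = 0" .
  have "fps_nth ((1 - fps_X^2) * ?G^2) 0 = 1" by (simp add: power2_eq_square gg_simps)
  then show ?thesis using d fps_deriv_eq_0_iff by (metis fps_const_1_eq_1)
qed

lemma aux_eq:
  fixes A B f y x :: rat
  assumes "f \<noteq> 0" "y \<ge> 0"
    and e: "A/((y+2)*((y+1)*f)) - B/f = B/((y+1)*f) + x^2*B/((y+2)*((y+1)*f))"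
  shows "A = (x^2 + (y+2)^2)*B"
proof -
  have h: "y + 1 \<noteq> 0" "y + 2 \<noteq> 0" "1 + y \<noteq> 0" "2 + y \<noteq> 0" using assms by linarith+
  have "A - (y+2)*(y+1)*B = (y+2)*B + x^2*B"
    using e h assms(1) by (simp add: divide_simps) (simp add: algebra_simps)
  then show ?thesis by (simp add: algebra_simps power2_eq_square)
qed

lemma ring_aux1:
  fixes c G F D Y :: "'a::comm_ring_1"
  shows "(1 - Y) * (c * D * F + c * G * (c * G * F)) = c * ((1 - Y) * D) * F + c * c * ((1 - Y) * G^2) * F"
  by (simp add: algebra_simps power2_eq_square)

lemma P_step_poly: "poly (P (Suc (Suc n))) x = (x^2 + of_nat n ^ 2) * poly (P n) x"
proof -
  define p where "p = (\<lambda>N. poly (P N) x)"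
  let ?G = "EF gg" and ?F = "EF p"
  have F1: "fps_deriv ?F = fps_const x * ?G * ?F" using F_deriv[of x] unfolding p_def .
  have F2: "fps_deriv (fps_deriv ?F) = fps_const x * fps_deriv ?G * ?F + fps_const x * ?G * (fps_const x * ?G * ?F)"
    by (simp add: F1 algebra_simps)
  have "(1 - fps_X^2) * fps_deriv (fps_deriv ?F) =
      fps_const x * ((1 - fps_X^2) * fps_deriv ?G) * ?F + fps_const x * fps_const x * ((1 - fps_X^2) * ?G^2) * ?F"
    unfolding F2 by (rule ring_aux1)
  also have "\<dots> = fps_X * (fps_const x * ?G * ?F) + fps_const x * fps_const x * ?F"
    unfolding G_ode H_one by (simp add: algebra_simps)
  finally have ode: "(1 - fps_X^2) * fps_deriv (fps_deriv ?F) = fps_X * fps_deriv ?F + fps_const x * fps_const x * ?F"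
    unfolding F1 .
  have "fps_nth ((1 - fps_X^2) * fps_deriv (fps_deriv ?F)) n = fps_nth (fps_X * fps_deriv ?F + fps_const x * fps_const x * ?F) n"
    by (simp only: ode)
  then have E: "p (Suc (Suc n)) / fact n - (if n < 2 then 0 else p n / fact (n - 2)) =
       (if n = 0 then 0 else p n / fact (n - 1)) + x * x * p n / fact n"
    unfolding left_diff_distrib mult_1 fps_sub_nth fps_X_power_mult_nth EF_deriv fps_add_nth fps_X_mult_nth
      mult.assoc fps_mult_left_const_nth EF_nth
    by (auto simp: Suc_diff_Suc numeral_2_eq_2 split: if_splits)
  show ?thesis
  proof (cases n)
    case 0 then show ?thesis using E unfolding p_def by (simp add: power2_eq_square)
  next
    case (Suc m) note m = this
    show ?thesis
    proof (cases m)
      case 0 then show ?thesis using E m unfolding p_def by (simp add: power2_eq_square algebra_simps)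
    next
      case (Suc l)
      have "p (Suc (Suc n)) / ((of_nat l+2)*((of_nat l+1)*fact l)) - p n / fact l =
            p n / ((of_nat l+1)*fact l) + x^2 * p n / ((of_nat l+2)*((of_nat l+1)*fact l))"
        using E m Suc by (simp add: fact_Suc power2_eq_square algebra_simps)
      from aux_eq[OF _ _ this] have "p (Suc (Suc n)) = (x^2 + (of_nat l+2)^2) * p n" by simp
      then show ?thesis using m Suc unfolding p_def by (simp add: algebra_simps)
    qed
  qed
qed

lemma P_step: "P (Suc (Suc n)) = [:of_nat n ^ 2, 0, 1:] * P n"
  by (rule poly_eq_poly_eq_iff[THEN iffD1]) (rule ext, simp del: P.simps add: P_step_poly algebra_simps power2_eq_square)



definition E :: "nat \<Rightarrow> rat poly" where
  "E n = (\<Prod>j<n. [:of_nat (2*j+1) ^ 2, 0, 1:])"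

definition DD :: "nat \<Rightarrow> rat poly" where
  "DD n = (\<Prod>j<n. [: - ((of_nat (2*j+1) / 2) ^ 2), 0, 1 :])"

lemma P_one: "P (Suc 0) = [:0,1:]"
  by (simp add: gg_def)

lemma P_odd: "P (2*n+1) = [:0,1:] * E n"
proof (induction n)
  case 0 then show ?case by (simp add: E_def P_one)
next
  case (Suc n)
  have "P (2 * Suc n + 1) = P (Suc (Suc (2*n+1)))" by simp
  also have "\<dots> = [:of_nat (2*n+1) ^ 2, 0, 1:] * P (2*n+1)" by (rule P_step)
  also have "\<dots> = [:0,1:] * E (Suc n)" unfolding Suc E_def by (simp add: mult_ac)
  finally show ?case .
qed

lemma prod_int_shift: "(\<Prod>l\<in>{- int n..int n - 1}. [: of_int l + 1/2, 1 :]) = DD n"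
proof (induction n)
  case 0 then show ?case by (simp add: DD_def)
next
  case (Suc n)
  have s: "{- int (Suc n)..int (Suc n) - 1} = insert (- int n - 1) (insert (int n) {- int n..int n - 1})"
    by auto
  have "(\<Prod>l\<in>{- int (Suc n)..int (Suc n) - 1}. [: of_int l + 1/2, 1 :]) =
      [: of_int (- int n - 1) + 1/2, 1 :] * ([: of_int (int n) + 1/2, 1 :] * DD n)"
    unfolding s Suc[symmetric] by (subst prod.insert; simp)+
  also have "\<dots> = DD (Suc n)"
  proof -
    have q: "[: of_int (- int n - 1) + 1/2, 1 :] * [: of_int (int n) + 1/2, 1 :] = ([: - ((of_nat (2*n+1) / 2) ^ 2), 0, 1 :] :: rat poly)"
      by (rule poly_eq_poly_eq_iff[THEN iffD1]) (rule ext, simp add: field_simps power2_eq_square)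
    show ?thesis unfolding DD_def prod.lessThan_Suc q[symmetric] by (simp only: ac_simps)
  qed
  finally show ?case .
qed

lemma cfp_odd: "central_fact_poly (2*n+1) = [:0,1:] * DD n"
proof -
  have "(\<Prod>i\<in>{1..2*n}. [: of_nat (2*n+1) / 2 - of_nat i, 1 :]) =
        (\<Prod>l\<in>{- int n..int n - 1}. [: of_int l + 1/2, 1 :] :: rat poly)"
  proof (rule prod.reindex_bij_witness[where j = "\<lambda>a. int n - int a" and i = "\<lambda>b. nat (int n - b)"])
    fix a assume "a \<in> {1..2*n}"
    then show "nat (int n - (int n - int a)) = a" "int n - int a \<in> {- int n..int n - 1}" by auto
    show "[: of_int (int n - int a) + 1/2, 1 :] = ([: of_nat (2*n+1) / 2 - of_nat a, 1 :] :: rat poly)"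
      by (simp add: field_simps)
  next
    fix b assume "b \<in> {- int n..int n - 1}"
    then show "int n - int (nat (int n - b)) = b" "nat (int n - b) \<in> {1..2*n}" by auto
  qed
  then show ?thesis unfolding central_fact_poly_def prod_int_shift by simp
qed

lemma coeff_quad: "coeff ([:c,0,1:] * Q) (2*i) = c * coeff Q (2*i) + (if i = 0 then 0 else coeff Q (2*(i-1)))"
  for Q :: "rat poly"
  by (cases i) (simp_all add: coeff_pCons)

lemma DE_coeff: "(-4)^n * coeff (DD n) (2*i) = (-4)^i * coeff (E n) (2*i)"
proof (induction n arbitrary: i)
  case 0 then show ?case by (cases i) (simp_all add: DD_def E_def coeff_1)
next
  case (Suc n)
  let ?a = "(of_nat (2*n+1) / 2) ^ 2 :: rat"
  have d: "DD (Suc n) = [: - ?a, 0, 1 :] * DD n" unfolding DD_def by (simp add: mult_ac)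
  have e: "E (Suc n) = [:4 * ?a, 0, 1:] * E n" unfolding E_def by (simp add: mult_ac power_divide)
  show ?case
  proof (cases i)
    case 0 then show ?thesis unfolding d e coeff_quad using Suc.IH[of 0] by (simp add: algebra_simps)
  next
    case (Suc k)
    define di where "di = coeff (DD n) (2*i)"
    define dk where "dk = coeff (DD n) (2*k)"
    define ei where "ei = coeff (E n) (2*i)"
    define ek where "ek = coeff (E n) (2*k)"
    have h1: "(-4)^n * di = (-4)^i * ei" using Suc.IH[of i] di_def ei_def by simp
    have h2: "(-4)^n * dk = (-4)^k * ek" using Suc.IH[of k] dk_def ek_def by simp
    have "(-4)^Suc n * coeff (DD (Suc n)) (2*i) = (-4)^Suc n * (- ?a * di + dk)"
      unfolding d coeff_quad di_def dk_def using Suc by simp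
    also have "\<dots> = 4 * ?a * ((-4)^n * di) + (-4) * ((-4)^n * dk)" by (simp add: algebra_simps)
    also have "\<dots> = 4 * ?a * ((-4)^i * ei) + (-4) * ((-4)^k * ek)" unfolding h1 h2 ..
    also have "\<dots> = (-4)^i * (4 * ?a * ei + ek)" using Suc by (simp add: algebra_simps)
    also have "\<dots> = (-4)^i * coeff (E (Suc n)) (2*i)"
      unfolding e coeff_quad ei_def ek_def using Suc by simp
    finally show ?thesis .
  qed
qed

lemma deg_E: "degree (E n) \<le> 2*n"
proof (induction n)
  case 0 then show ?case by (simp add: E_def)
next
  case (Suc n)
  have "degree (E (Suc n)) = degree (E n * [:of_nat (2*n+1) ^ 2, 0, 1 :: rat:])"
    unfolding E_def by simp
  also have "\<dots> \<le> degree (E n) + degree [:of_nat (2*n+1) ^ 2, 0, 1 :: rat:]"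
    by (rule degree_mult_le)
  also have "\<dots> = degree (E n) + 2" by simp
  finally show ?case using Suc by simp
qed

theorem theorem19:
  fixes n k :: nat
  shows "\<bar>vnum n k\<bar> = of_nat (card {R. riordan_complex n k R})"
proof -
  have "{R. riordan_complex n k R} = {R. cplx {1..2*n+1} (2*k+1) R}" by (simp add: riordan_cplx)
  then have "(of_nat (card {R. riordan_complex n k R}) :: rat) = coeff (P (card {1..2*n+1})) (2*k+1)"
    using count_P[of "{1..2*n+1}" "2*k+1"] by simp
  also have "\<dots> = coeff (P (2*n+1)) (Suc (2*k))" by simp
  also have "\<dots> = coeff (E n) (2*k)" unfolding P_odd by (simp add: coeff_pCons)
  finally have c: "(of_nat (card {R. riordan_complex n k R}) :: rat) = coeff (E n) (2*k)" .
  have v: "vnum n k = 4^(n-k) * coeff (DD n) (2*k)"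
    unfolding vnum_def cfact1_def cfp_odd by (simp add: coeff_pCons)
  have ge: "coeff (E n) (2*k) \<ge> 0" using c[symmetric] by simp
  have de: "(-4)^n * coeff (DD n) (2*k) = (-4)^k * coeff (E n) (2*k)" by (rule DE_coeff)
  show ?thesis
  proof (cases "k \<le> n")
    case True
    have "(-4::rat)^n = (-4)^k * (-4)^(n-k)" using True by (simp add: power_add[symmetric])
    then have "(-4)^(n-k) * coeff (DD n) (2*k) = coeff (E n) (2*k)" using de by simp
    then have "\<bar>(-4::rat)^(n-k) * coeff (DD n) (2*k)\<bar> = coeff (E n) (2*k)" using ge by simp
    then show ?thesis unfolding v c by (simp add: abs_mult power_abs)
  next
    case False
    then have "degree (E n) < 2*k" using deg_E[of n] by simp
    then have e0: "coeff (E n) (2*k) = 0" by (rule coeff_eq_0)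
    then have "coeff (DD n) (2*k) = 0" using de by simp
    then show ?thesis unfolding v c e0 by simp
  qed
qed


end
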